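(* Let $A=(a_{i,j})$ be a symmetric $n\times n$ matrix with nonnegative entries whose associated undirected graph on $\{1,\dots,n\}$ (edge $\{i,j\}$ present iff $a_{i,j}>0$, self-loops allowed) is connected, let $\deg(i)=\sum_{j=1}^n a_{i,j}>0$, and let $\gamma_1,\dots,\gamma_n>0$. Let $\beta^*\in[0,1]^n$ be an equilibrium point, i.e. $F(\beta^* )=\beta^*$. If $\beta_i^*=0$ for some $i$, then $\beta_i^*=0$ for all $i$; likewise, if $\beta_i^*=1$ for some $i$, then $\beta_i^*=1$ for all $i$.
   Context: For $\mu\in[0,1]$ and $\gamma>0$ define $f(\mu,\gamma)=\dfrac{\gamma\mu}{1+(\gamma-1)\mu}$. For $\beta\in[0,1]^n$ let $\mu_i(\beta)=\frac{1}{\deg(i)}\sum_{j=1}^n a_{i,j}\beta_j$ and define $F:[0,1]^n\to[0,1]^n$ by $F_i(\beta)=f(\mu_i(\beta),\gamma_i)$. A point $\beta$ with $F(\beta)=\beta$ is called an equilibrium point. *)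

theory Defs
  imports Main "HOL-Analysis.Analysis"
begin

text \<open>Vertices are indexed by 0..<n (i.e. index i here corresponds to i+1 in the paper).
  The matrix A is a function a :: nat => nat => real, only entries with indices < n matter.\<close>

definition fmap :: "real \<Rightarrow> real \<Rightarrow> real" where
  "fmap \<mu> \<gamma> = \<gamma> * \<mu> / (1 + (\<gamma> - 1) * \<mu>)"

definition deg :: "nat \<Rightarrow> (nat \<Rightarrow> nat \<Rightarrow> real) \<Rightarrow> nat \<Rightarrow> real" where
  "deg n a i = (\<Sum>j<n. a i j)"

definition mu :: "nat \<Rightarrow> (nat \<Rightarrow> nat \<Rightarrow> real) \<Rightarrow> (nat \<Rightarrow> real) \<Rightarrow> nat \<Rightarrow> real" where
  "mu n a \<beta> i = (1 / deg n a i) * (\<Sum>j<n. a i j * \<beta> j)"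

definition Fmap :: "nat \<Rightarrow> (nat \<Rightarrow> nat \<Rightarrow> real) \<Rightarrow> (nat \<Rightarrow> real) \<Rightarrow> (nat \<Rightarrow> real) \<Rightarrow> nat \<Rightarrow> real" where
  "Fmap n a \<gamma> \<beta> i = fmap (mu n a \<beta> i) (\<gamma> i)"

definition graph_edges :: "nat \<Rightarrow> (nat \<Rightarrow> nat \<Rightarrow> real) \<Rightarrow> (nat \<times> nat) set" where
  "graph_edges n a = {(i, j). i < n \<and> j < n \<and> a i j > 0}"

definition graph_connected :: "nat \<Rightarrow> (nat \<Rightarrow> nat \<Rightarrow> real) \<Rightarrow> bool" where
  "graph_connected n a \<longleftrightarrow> (\<forall>i<n. \<forall>j<n. (i, j) \<in> (graph_edges n a)\<^sup>*)"

definition equilibrium :: "nat \<Rightarrow> (nat \<Rightarrow> nat \<Rightarrow> real) \<Rightarrow> (nat \<Rightarrow> real) \<Rightarrow> (nat \<Rightarrow> real) \<Rightarrow> bool" where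
  "equilibrium n a \<gamma> \<beta> \<longleftrightarrow> (\<forall>i<n. Fmap n a \<gamma> \<beta> i = \<beta> i)"

end

theory Submission
  imports Defs
begin

lemma key:
  fixes n :: nat and a :: "nat \<Rightarrow> nat \<Rightarrow> real"
    and \<gamma> :: "nat \<Rightarrow> real" and \<beta> :: "nat \<Rightarrow> real"
  assumes nonneg: "\<forall>i<n. \<forall>j<n. a i j \<ge> 0"
    and degpos: "\<forall>i<n. deg n a i > 0"
    and gpos: "\<forall>i<n. \<gamma> i > 0"
    and range: "\<forall>i<n. 0 \<le> \<beta> i \<and> \<beta> i \<le> 1"
    and eq: "equilibrium n a \<gamma> \<beta>"
    and i: "i < n" and j: "j < n" and aij: "a i j > 0"
  shows "(\<beta> i = 0 \<longrightarrow> \<beta> j = 0) \<and> (\<beta> i = 1 \<longrightarrow> \<beta> j = 1)"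
proof -
  define S where "S = (\<Sum>j<n. a i j * \<beta> j)"
  define D where "D = deg n a i"
  have D: "D > 0" using degpos i D_def by auto
  have S0: "S \<ge> 0" unfolding S_def using nonneg range i by (auto intro!: sum_nonneg)
  have SD: "S \<le> D" unfolding S_def D_def deg_def using nonneg range i
    by (auto intro!: sum_mono mult_left_le)
  define m where "m = S / D"
  have m: "mu n a \<beta> i = m" unfolding mu_def m_def S_def D_def by simp
  have m0: "m \<ge> 0" and m1: "m \<le> 1" using S0 SD D by (auto simp: m_def)
  have g: "\<gamma> i > 0" using gpos i by auto
  have den: "1 + (\<gamma> i - 1) * m > 0"
  proof -
    have "1 + (\<gamma> i - 1) * m = (1 - m) + \<gamma> i * m" by (simp add: algebra_simps)
    moreover have "\<gamma> i * m \<ge> 0" using g m0 by simp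
    ultimately show ?thesis using m1 g
      by (smt (verit) mult_pos_pos)
  qed
  have bi: "\<beta> i = \<gamma> i * m / (1 + (\<gamma> i - 1) * m)"
    using eq i m unfolding equilibrium_def Fmap_def fmap_def by auto
  have terms0: "\<And>k. k \<in> {..<n} \<Longrightarrow> a i k * \<beta> k \<ge> 0" using nonneg range i by auto
  have terms1: "\<And>k. k \<in> {..<n} \<Longrightarrow> a i k * (1 - \<beta> k) \<ge> 0" using nonneg range i by auto
  show ?thesis
  proof (intro conjI impI)
    assume "\<beta> i = 0"
    then have "\<gamma> i * m = 0" using bi den by (simp add: divide_eq_0_iff)
    then have "m = 0" using g by simp
    then have "S = 0" using D by (simp add: m_def)
    then have "a i j * \<beta> j = 0" unfolding S_def using sum_nonneg_eq_0_iff[OF finite_lessThan terms0] j by simp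
    then show "\<beta> j = 0" using aij by simp
  next
    assume "\<beta> i = 1"
    then have "\<gamma> i * m = 1 + (\<gamma> i - 1) * m" using bi den by (simp add: field_simps)
    then have "m = 1" by (simp add: algebra_simps)
    then have "S = D" using D by (simp add: m_def)
    then have "(\<Sum>k<n. a i k * (1 - \<beta> k)) = 0"
      unfolding S_def D_def deg_def by (simp add: algebra_simps sum_subtractf)
    then have "a i j * (1 - \<beta> j) = 0" using sum_nonneg_eq_0_iff[OF finite_lessThan terms1] j by simp
    then show "\<beta> j = 1" using aij by simp
  qed
qed

theorem lemma1:
  fixes n :: nat and a :: "nat \<Rightarrow> nat \<Rightarrow> real"
    and \<gamma> :: "nat \<Rightarrow> real" and \<beta> :: "nat \<Rightarrow> real"
  assumes sym: "\<forall>i<n. \<forall>j<n. a i j = a j i"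
    and nonneg: "\<forall>i<n. \<forall>j<n. a i j \<ge> 0"
    and conn: "graph_connected n a"
    and degpos: "\<forall>i<n. deg n a i > 0"
    and gpos: "\<forall>i<n. \<gamma> i > 0"
    and range: "\<forall>i<n. 0 \<le> \<beta> i \<and> \<beta> i \<le> 1"
    and eq: "equilibrium n a \<gamma> \<beta>"
  shows "((\<exists>i<n. \<beta> i = 0) \<longrightarrow> (\<forall>i<n. \<beta> i = 0))
       \<and> ((\<exists>i<n. \<beta> i = 1) \<longrightarrow> (\<forall>i<n. \<beta> i = 1))"
proof -
  have P: "(\<beta> i = 0 \<longrightarrow> \<beta> j = 0) \<and> (\<beta> i = 1 \<longrightarrow> \<beta> j = 1)"
    if "(i, j) \<in> (graph_edges n a)\<^sup>*" for i j
    using that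
  proof (induction rule: rtrancl_induct)
    case base then show ?case by simp
  next
    case (step y z)
    then have "y < n" "z < n" "a y z > 0" by (auto simp: graph_edges_def)
    from key[OF nonneg degpos gpos range eq this] step.IH show ?case by blast
  qed
  show ?thesis
    using conn P unfolding graph_connected_def by blast
qed

end
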